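(* Let $e'>2$ be an integer and $S=\{0\}\cup(e'+\mathbb N)$. Then the conductor of $S$ is $c'=e'$, and \[ \delta^2_S(c'+e'-2)=3,\qquad \delta^2_S(c'+e'-1)=4. \]
   Context: The conductor of a numerical semigroup $S$ is the least integer $c$ with $c+\mathbb N\subseteq S$. $D_S(x)=\{s\in S:x-s\in S\}$ and $\delta^2_S(m)=\min\{|D_S(m_1)\cup D_S(m_2)|: m\le m_1<m_2,\ m_1,m_2\in S\}$. *)

theory Defs
  imports Main
begin

definition conductor :: "nat set \<Rightarrow> nat" where
  "conductor S = (LEAST c. \<forall>n. c + n \<in> S)"

text \<open>D_S(x) = {s in S : x - s in S}; with natural numbers this requires s \<le> x.\<close>
definition Dset :: "nat set \<Rightarrow> nat \<Rightarrow> nat set" where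
  "Dset S x = {s \<in> S. s \<le> x \<and> x - s \<in> S}"

definition delta2 :: "nat set \<Rightarrow> nat \<Rightarrow> nat" where
  "delta2 S m = (LEAST k. \<exists>m1 m2. m \<le> m1 \<and> m1 < m2 \<and> m1 \<in> S \<and> m2 \<in> S
                     \<and> k = card (Dset S m1 \<union> Dset S m2))"

end

theory Submission
  imports Defs
begin

lemma Dsmall:
  assumes "e > 2" "S = {0} \<union> {n. e \<le> n}" "e \<le> x" "x < 2*e"
  shows "Dset S x = {0, x}"
  using assms unfolding Dset_def by auto

lemma Dsub:
  assumes "x \<in> S" "0 \<in> S"
  shows "{0, x} \<subseteq> Dset S x" "finite (Dset S x)"
  using assms unfolding Dset_def by auto

theorem lemma4p9:
  fixes e' :: nat and S :: "nat set"
  assumes "e' > 2"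
    and "S = {0} \<union> {n. e' \<le> n}"
  shows "conductor S = e'
    \<and> delta2 S (conductor S + e' - 2) = 3
    \<and> delta2 S (conductor S + e' - 1) = 4"
proof -
  have c: "conductor S = e'"
    unfolding conductor_def
  proof (rule Least_equality)
    show "\<forall>n. e' + n \<in> S" using assms by auto
  next
    fix c assume h: "\<forall>n. c + n \<in> S"
    show "e' \<le> c"
    proof (rule ccontr)
      assume "\<not> e' \<le> c"
      then have "c + (e' - 1 - c) = e' - 1" by simp
      moreover have "e' - 1 \<notin> S" using assms by auto
      ultimately show False using h by metis
    qed
  qed
  have z: "0 \<in> S" using assms by auto
  have d1: "delta2 S (e' + e' - 2) = 3"
    unfolding delta2_def
  proof (rule Least_equality)
    have "Dset S (e'+e'-2) \<union> Dset S (e'+e'-1) = {0, e'+e'-2, e'+e'-1}"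
      using Dsmall[OF assms, of "e'+e'-2"] Dsmall[OF assms, of "e'+e'-1"] assms(1) by auto
    moreover have "card {0, e'+e'-2, e'+e'-1} = 3" using assms(1) by auto
    ultimately show "\<exists>m1 m2. e'+e'-2 \<le> m1 \<and> m1 < m2 \<and> m1 \<in> S \<and> m2 \<in> S
                     \<and> 3 = card (Dset S m1 \<union> Dset S m2)"
      apply (rule_tac x="e'+e'-2" in exI, rule_tac x="e'+e'-1" in exI)
      using assms by auto
  next
    fix k assume "\<exists>m1 m2. e'+e'-2 \<le> m1 \<and> m1 < m2 \<and> m1 \<in> S \<and> m2 \<in> S
                     \<and> k = card (Dset S m1 \<union> Dset S m2)"
    then obtain m1 m2 where h: "e'+e'-2 \<le> m1" "m1 < m2" "m1 \<in> S" "m2 \<in> S"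
      "k = card (Dset S m1 \<union> Dset S m2)" by blast
    have "{0, m1, m2} \<subseteq> Dset S m1 \<union> Dset S m2"
      using Dsub[OF h(3) z] Dsub[OF h(4) z] by auto
    moreover have "finite (Dset S m1 \<union> Dset S m2)" using Dsub[OF h(3) z] Dsub[OF h(4) z] by auto
    ultimately have "card {0, m1, m2} \<le> k" using h(5) card_mono by metis
    moreover have "card {0, m1, m2} = 3" using h assms(1) by auto
    ultimately show "3 \<le> k" by simp
  qed
  have d2: "delta2 S (e' + e' - 1) = 4"
    unfolding delta2_def
  proof (rule Least_equality)
    have "Dset S (e'+e') = {0, e', e'+e'}"
      using assms unfolding Dset_def by auto
    then have "Dset S (e'+e'-1) \<union> Dset S (e'+e') = {0, e', e'+e'-1, e'+e'}"
      using Dsmall[OF assms, of "e'+e'-1"] assms(1) by auto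
    moreover have "card {0, e', e'+e'-1, e'+e'} = 4" using assms(1) by auto
    ultimately show "\<exists>m1 m2. e'+e'-1 \<le> m1 \<and> m1 < m2 \<and> m1 \<in> S \<and> m2 \<in> S
                     \<and> 4 = card (Dset S m1 \<union> Dset S m2)"
      apply (rule_tac x="e'+e'-1" in exI, rule_tac x="e'+e'" in exI)
      using assms by auto
  next
    fix k assume "\<exists>m1 m2. e'+e'-1 \<le> m1 \<and> m1 < m2 \<and> m1 \<in> S \<and> m2 \<in> S
                     \<and> k = card (Dset S m1 \<union> Dset S m2)"
    then obtain m1 m2 where h: "e'+e'-1 \<le> m1" "m1 < m2" "m1 \<in> S" "m2 \<in> S"
      "k = card (Dset S m1 \<union> Dset S m2)" by blast
    have "e' \<in> Dset S m2" using h assms unfolding Dset_def by auto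
    then have "{0, e', m1, m2} \<subseteq> Dset S m1 \<union> Dset S m2"
      using Dsub[OF h(3) z] Dsub[OF h(4) z] by auto
    moreover have "finite (Dset S m1 \<union> Dset S m2)" using Dsub[OF h(3) z] Dsub[OF h(4) z] by auto
    ultimately have "card {0, e', m1, m2} \<le> k" using h(5) card_mono by metis
    moreover have "m1 \<noteq> e'" "e' \<noteq> m2" using h assms(1) by auto
    moreover have "card {0, e', m1, m2} = 4" using h assms(1) calculation by auto
    ultimately show "4 \<le> k" by simp
  qed
  show ?thesis using c d1 d2 by simp
qed

end
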